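(* Let $\Omega_2=\mathbb{R}\times\mathbb{R}$ (variables $(x,t)$) and let $\varepsilon\in(0,1)$. Define $w_\varepsilon:\Omega_2\to\mathbb{R}$ by $$w_\varepsilon(x,t)=\sum_{k=1}^\infty e^{-2^{(1+\varepsilon)k}}e^{-2^k x}\sin\big(2^{2k+1}t-2^k x\big).$$ Then $w_\varepsilon\in C^\infty(\Omega_2)$ and $w_\varepsilon$ satisfies the heat equation $\partial_t w_\varepsilon-\partial_x^2 w_\varepsilon=0$ on $\Omega_2$. For every fixed $x_0\in\mathbb{R}$, the function $t\mapsto w_\varepsilon(x_0,t)$ is not real analytic at any point $t_0\in\mathbb{R}$. Moreover, there exist positive constants $A_1,A_2$ depending only on $\varepsilon$ such that $$\sup_{x,t\in\mathbb{R}}|w_\varepsilon(x,t)|\exp\!\big(-A_2|x|^{1+\frac1\varepsilon}\big)\le A_1.$$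
   Context: A function of $t$ is real analytic at $t_0$ if its Taylor series at $t_0$ has positive radius of convergence and converges to the function on a neighborhood of $t_0$. *)

theory Defs
  imports "HOL-Analysis.Analysis"
begin

definition w_eps :: "real \<Rightarrow> real \<Rightarrow> real \<Rightarrow> real" where
  "w_eps \<epsilon> x t = (\<Sum>j. let k = real (Suc j) in
      exp (- (2 powr ((1 + \<epsilon>) * k))) * exp (- (2 powr k) * x)
        * sin (2 powr (2 * k + 1) * t - 2 powr k * x))"

definition dx :: "(real \<Rightarrow> real \<Rightarrow> real) \<Rightarrow> real \<Rightarrow> real \<Rightarrow> real" where
  "dx f x t = deriv (\<lambda>y. f y t) x"

definition dt :: "(real \<Rightarrow> real \<Rightarrow> real) \<Rightarrow> real \<Rightarrow> real \<Rightarrow> real" where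
  "dt f x t = deriv (\<lambda>s. f x s) t"

fun partials :: "bool list \<Rightarrow> (real \<Rightarrow> real \<Rightarrow> real) \<Rightarrow> real \<Rightarrow> real \<Rightarrow> real" where
  "partials [] f = f"
| "partials (b # bs) f = (if b then dx else dt) (partials bs f)"

definition smooth2 :: "(real \<Rightarrow> real \<Rightarrow> real) \<Rightarrow> bool" where
  "smooth2 f \<longleftrightarrow> (\<forall>ops.
     continuous_on UNIV (\<lambda>p. partials ops f (fst p) (snd p)) \<and>
     (\<forall>x t. (\<lambda>y. partials ops f y t) differentiable (at x) \<and>
            (\<lambda>s. partials ops f x s) differentiable (at t)))"

definition real_analytic_at :: "(real \<Rightarrow> real) \<Rightarrow> real \<Rightarrow> bool" where
  "real_analytic_at f t0 \<longleftrightarrow> (\<exists>r>0. \<forall>t. \<bar>t - t0\<bar> < r \<longrightarrow>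
     (\<lambda>n. (deriv ^^ n) f t0 / fact n * (t - t0) ^ n) sums f t)"

end

theory Submission imports Defs begin

definition lam :: "nat \<Rightarrow> real" where "lam j = 2 ^ Suc j"
definition al :: "nat \<Rightarrow> complex" where "al j = - (1 + \<i>) * of_real (lam j)"
definition be :: "nat \<Rightarrow> complex" where "be j = \<i> * of_real (2 * lam j ^ 2)"
definition trm :: "real \<Rightarrow> nat \<Rightarrow> nat \<Rightarrow> nat \<Rightarrow> real \<Rightarrow> real \<Rightarrow> real" where
  "trm e a b j x t = exp (- (lam j powr (1+e))) *
     Im (al j ^ a * be j ^ b * exp (al j * of_real x + be j * of_real t))"
definition G :: "real \<Rightarrow> nat \<Rightarrow> nat \<Rightarrow> real \<Rightarrow> real \<Rightarrow> real" where
  "G e a b x t = (\<Sum>j. trm e a b j x t)"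

lemma lam_pos: "lam j > 0" by (simp add: lam_def)
lemma lam_ge: "lam j \<ge> real j + 1"
proof -
  have "real (Suc j) < 2 ^ Suc j" by (metis of_nat_less_two_power)
  thus ?thesis by (simp add: lam_def)
qed

lemma norm_al: "norm (al j) \<le> 2 * lam j"
proof -
  have "norm (al j) = norm (-(1 + \<i>)) * norm (of_real (lam j) :: complex)"
    by (simp only: al_def norm_mult)
  hence "norm (al j) = norm (1 + \<i>) * lam j" using lam_pos[of j]
    by (simp only: norm_minus_cancel norm_of_real abs_of_pos)
  also have "norm (1 + \<i>) \<le> (2::real)" 
    by (smt (verit) norm_triangle_ineq norm_ii norm_one)
  finally show ?thesis using lam_pos[of j] by (simp add: mult_right_mono)
qed

lemma norm_be: "norm (be j) = 2 * lam j ^ 2"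
  by (simp add: be_def norm_mult norm_power)

lemma Re_arg: "Re (al j * of_real x + be j * of_real t) = - lam j * x"
  by (simp add: al_def be_def)

lemma trm_bound:
  assumes "x \<ge> - R"
  shows "\<bar>trm e a b j x t\<bar> \<le> (2 * lam j) ^ (a + 2*b) * exp (lam j * R - lam j powr (1+e))"
proof -
  have l: "lam j > 0" by (rule lam_pos)
  have four: "(4::real)^b = 2^(b*2)" by (induct b) auto
  have "\<bar>trm e a b j x t\<bar> \<le> exp (- (lam j powr (1+e))) *
     norm (al j ^ a * be j ^ b * exp (al j * of_real x + be j * of_real t))"
    unfolding trm_def abs_mult abs_exp_cancel by (intro mult_left_mono abs_Im_le_cmod) auto
  also have "norm (al j ^ a * be j ^ b * exp (al j * of_real x + be j * of_real t))
     = norm (al j) ^ a * (2 * lam j ^ 2) ^ b * exp (- lam j * x)"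
    by (simp add: norm_mult norm_power norm_be) (simp add: al_def be_def)
  also have "\<dots> \<le> (2 * lam j) ^ a * ((2 * lam j) ^ 2) ^ b * exp (lam j * R)"
  proof (intro mult_mono power_mono)
    show "norm (al j) \<le> 2 * lam j" by (rule norm_al)
    show "2 * lam j ^ 2 \<le> (2 * lam j) ^ 2" using l by (simp add: power2_eq_square)
    show "exp (- lam j * x) \<le> exp (lam j * R)" using l assms
      using mult_left_mono[of "-x" R "lam j"] by simp
  qed (use l in auto)
  finally have X: "\<bar>trm e a b j x t\<bar> \<le> exp (- (lam j powr (1+e))) * ((2 * lam j) ^ a * ((2 * lam j) ^ 2) ^ b * exp (lam j * R))"
    using l by (simp add: mult_left_mono del: power_mult_distrib)
  have "exp (- (lam j powr (1+e))) * ((2 * lam j) ^ a * ((2 * lam j) ^ 2) ^ b * exp (lam j * R))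
    = (2 * lam j) ^ (a + 2*b) * exp (lam j * R - lam j powr (1+e))"
    using four by (simp add: power_mult[symmetric] power_add exp_diff exp_minus field_simps)
  with X show ?thesis by simp
qed

lemma ln_lam: "ln (lam j) = (real j + 1) * ln 2"
proof -
  have "ln (lam j) = ln (2 ^ Suc j)" by (simp add: lam_def)
  also have "\<dots> = real (Suc j) * ln 2" by (rule ln_realpow)
  finally show ?thesis by simp
qed

lemma lam_powr_ge: assumes "0 \<le> e" shows "lam j powr e \<ge> e * ln 2 * (real j + 1)"
proof -
  have "lam j powr e = exp (e * ln (lam j))" using lam_pos[of j] by (simp add: powr_def)
  also have "\<dots> \<ge> 1 + e * ln (lam j)" by (rule exp_ge_add_one_self)
  finally show ?thesis using ln_lam[of j] by (simp add: mult_ac)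
qed

lemma ev_lam_powr: assumes "0 < e" shows "eventually (\<lambda>j. lam j powr e \<ge> B) sequentially"
proof -
  obtain n :: nat where n: "B / (e * ln 2) < real n" using reals_Archimedean2 by blast
  have p: "e * ln 2 > 0" using assms by simp
  show ?thesis unfolding eventually_sequentially
  proof (intro exI allI impI)
    fix j assume "n \<le> j"
    hence "B < e * ln 2 * real j" using n p
      by (smt (verit, ccfv_SIG) divide_less_eq mult.commute mult_left_mono of_nat_mono)
    also have "\<dots> \<le> e * ln 2 * (real j + 1)" using p by (intro mult_left_mono) auto
    also have "\<dots> \<le> lam j powr e" using assms by (intro lam_powr_ge) simp
    finally show "B \<le> lam j powr e" by simp
  qed
qed

lemma lam_powr_split: "lam j powr (1 + e) = lam j * lam j powr e"
  using lam_pos[of j] by (simp add: powr_add)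

lemma summ_M: assumes "0 < e"
  shows "summable (\<lambda>j. (2 * lam j) ^ N * exp (lam j * R - lam j powr (1+e)))"
proof (rule summable_comparison_test_ev)
  show "summable (\<lambda>j. exp (-1::real) ^ j)" proof -
    have "norm (exp (-1::real)) < 1" by simp
    from summable_geometric[OF this] show ?thesis .
  qed
  show "eventually (\<lambda>j. norm ((2 * lam j) ^ N * exp (lam j * R - lam j powr (1+e))) \<le> exp (-1) ^ j) sequentially"
    using ev_lam_powr[OF assms, of "2 * real N + R + 1"]
  proof eventually_elim
    case (elim j)
    have l: "lam j > 0" by (rule lam_pos)
    have "(2 * lam j) ^ N \<le> exp (2 * lam j) ^ N"
      using l by (intro power_mono) (smt (verit) exp_ge_add_one_self, simp)
    also have "\<dots> = exp (2 * real N * lam j)" by (simp add: exp_of_nat_mult[symmetric] mult_ac)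
    finally have A: "(2 * lam j) ^ N \<le> exp (2 * real N * lam j)" .
    have "lam j powr (1+e) \<ge> lam j * (2 * real N + R + 1)"
      unfolding lam_powr_split using elim l by (intro mult_left_mono) auto
    hence "2 * real N * lam j + (lam j * R - lam j powr (1+e)) \<le> - lam j"
      by (simp add: algebra_simps)
    also have "- lam j \<le> - real j" using lam_ge[of j] by simp
    finally have B: "2 * real N * lam j + (lam j * R - lam j powr (1+e)) \<le> - real j" .
    have "norm ((2 * lam j) ^ N * exp (lam j * R - lam j powr (1+e)))
       = (2 * lam j) ^ N * exp (lam j * R - lam j powr (1+e))" using l by simp
    also have "\<dots> \<le> exp (2 * real N * lam j) * exp (lam j * R - lam j powr (1+e))"
      using A by (intro mult_right_mono) auto
    also have "\<dots> = exp (2 * real N * lam j + (lam j * R - lam j powr (1+e)))" by (simp add: exp_add)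
    also have "\<dots> \<le> exp (- real j)" using B by simp
    also have "\<dots> = exp (-1) ^ j" by (simp add: exp_of_nat_mult[symmetric])
    finally show ?case .
  qed
qed

abbreviation MM :: "real \<Rightarrow> nat \<Rightarrow> real \<Rightarrow> nat \<Rightarrow> real" where
  "MM e N R j \<equiv> (2 * lam j) ^ N * exp (lam j * R - lam j powr (1+e))"

lemma trm_summable: assumes "0 < e" shows "summable (\<lambda>j. \<bar>trm e a b j x t\<bar>)"
proof (rule summable_comparison_test[OF _ summ_M[OF assms, of "a+2*b" "\<bar>x\<bar>"]])
  have "\<And>n. norm \<bar>trm e a b n x t\<bar> \<le> MM e (a+2*b) \<bar>x\<bar> n"
    using trm_bound[of "\<bar>x\<bar>" x e a b _ t] by simp
  thus "\<exists>N. \<forall>n\<ge>N. norm \<bar>trm e a b n x t\<bar> \<le> MM e (a+2*b) \<bar>x\<bar> n" by blast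
qed

lemma trm_summable': assumes "0 < e" shows "summable (\<lambda>j. trm e a b j x t)"
  by (rule summable_rabs_cancel[OF trm_summable[OF assms]])

lemma cexp_deriv_real:
  "((\<lambda>y::real. Im (c * exp (d * of_real y + k))) has_real_derivative Im (c * d * exp (d * of_real x + k))) (at x)"
proof -
  have "((\<lambda>z. c * exp (d * z + k)) has_field_derivative c * d * exp (d * of_real x + k)) (at (of_real x))"
    by (auto intro!: derivative_eq_intros simp: mult_ac)
  hence "((\<lambda>y::real. c * exp (d * of_real y + k)) has_vector_derivative c * d * exp (d * of_real x + k)) (at x)"
    by (rule has_vector_derivative_real_field)
  hence "((\<lambda>y::real. Im (c * exp (d * of_real y + k))) has_vector_derivative Im (c * d * exp (d * of_real x + k))) (at x)"
    by (rule bounded_linear.has_vector_derivative[OF bounded_linear_Im])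
  thus ?thesis by (simp add: has_real_derivative_iff_has_vector_derivative)
qed

lemma trm_dx: "((\<lambda>y. trm e a b j y t) has_real_derivative trm e (Suc a) b j x t) (at x)"
proof -
  have "((\<lambda>y::real. Im ((al j ^ a * be j ^ b) * exp (al j * of_real y + be j * of_real t)))
     has_real_derivative Im ((al j ^ a * be j ^ b) * al j * exp (al j * of_real x + be j * of_real t))) (at x)"
    by (rule cexp_deriv_real)
  from DERIV_cmult[OF this, of "exp (- (lam j powr (1+e)))"]
  show ?thesis unfolding trm_def by (simp add: mult_ac)
qed

lemma trm_dt: "((\<lambda>s. trm e a b j x s) has_real_derivative trm e a (Suc b) j x t) (at t)"
proof -
  have "((\<lambda>y::real. Im ((al j ^ a * be j ^ b) * exp (be j * of_real y + al j * of_real x)))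
     has_real_derivative Im ((al j ^ a * be j ^ b) * be j * exp (be j * of_real t + al j * of_real x))) (at t)"
    by (rule cexp_deriv_real)
  from DERIV_cmult[OF this, of "exp (- (lam j powr (1+e)))"]
  show ?thesis unfolding trm_def by (simp add: mult_ac add.commute)
qed

lemma G_dx: assumes "0 < e"
  shows "((\<lambda>y. G e a b y t) has_real_derivative G e (Suc a) b x t) (at x)"
proof -
  define S where "S = {x - 1 <..< x + 1}"
  have "((\<lambda>y. \<Sum>j. trm e a b j y t) has_field_derivative (\<Sum>j. trm e (Suc a) b j x t)) (at x)"
  proof (rule has_field_derivative_series'(2)[of S "\<lambda>n y. trm e a b n y t" _ x])
    show "convex S" by (simp add: S_def)
    show "((\<lambda>y. trm e a b n y t) has_field_derivative trm e (Suc a) b n y t) (at y within S)" for n y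
      by (rule has_field_derivative_at_within[OF trm_dx])
    show "uniformly_convergent_on S (\<lambda>n y. \<Sum>i<n. trm e (Suc a) b i y t)"
    proof (rule Weierstrass_m_test'[OF _ summ_M[OF assms, of "Suc a + 2*b" "\<bar>x\<bar> + 1"]])
      fix n y assume "y \<in> S"
      hence "y \<ge> - (\<bar>x\<bar> + 1)" by (auto simp: S_def)
      thus "norm (trm e (Suc a) b n y t) \<le> MM e (Suc a + 2*b) (\<bar>x\<bar> + 1) n"
        using trm_bound[of "\<bar>x\<bar> + 1" y e "Suc a" b n t] by simp
    qed
    show "x \<in> S" "x \<in> interior S" by (auto simp: S_def)
    show "summable (\<lambda>n. trm e a b n x t)" by (rule trm_summable'[OF assms])
  qed
  thus ?thesis by (simp add: G_def)
qed

lemma G_dt: assumes "0 < e"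
  shows "((\<lambda>s. G e a b x s) has_real_derivative G e a (Suc b) x t) (at t)"
proof -
  have "((\<lambda>s. \<Sum>j. trm e a b j x s) has_field_derivative (\<Sum>j. trm e a (Suc b) j x t)) (at t)"
  proof (rule has_field_derivative_series'(2)[of UNIV "\<lambda>n s. trm e a b n x s" _ t])
    show "convex (UNIV::real set)" by simp
    show "((\<lambda>s. trm e a b n x s) has_field_derivative trm e a (Suc b) n x s) (at s within UNIV)" for n s
      by (rule trm_dt)
    show "uniformly_convergent_on UNIV (\<lambda>n s. \<Sum>i<n. trm e a (Suc b) i x s)"
    proof (rule Weierstrass_m_test'[OF _ summ_M[OF assms, of "a + 2*Suc b" "\<bar>x\<bar>"]])
      fix n s
      show "norm (trm e a (Suc b) n x s) \<le> MM e (a + 2*Suc b) (\<bar>x\<bar>) n"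
        using trm_bound[of "\<bar>x\<bar>" x e a "Suc b" n s] by simp
    qed
    show "t \<in> UNIV" "t \<in> interior UNIV" by auto
    show "summable (\<lambda>n. trm e a b n x t)" by (rule trm_summable'[OF assms])
  qed
  thus ?thesis by (simp add: G_def)
qed

lemma G_cont: assumes "0 < e"
  shows "continuous_on UNIV (\<lambda>p. G e a b (fst p) (snd p))"
proof (rule continuous_at_imp_continuous_on, intro ballI)
  fix p0 :: "real \<times> real"
  define S where "S = {p::real\<times>real. \<bar>fst p\<bar> < \<bar>fst p0\<bar> + 1}"
  have oS: "open S" unfolding S_def
    by (intro open_Collect_less continuous_intros)
  have "uniform_limit S (\<lambda>n p. \<Sum>i<n. trm e a b i (fst p) (snd p))
          (\<lambda>p. suminf (\<lambda>i. trm e a b i (fst p) (snd p))) sequentially"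
  proof (rule Weierstrass_m_test[OF _ summ_M[OF assms, of "a + 2*b" "\<bar>fst p0\<bar> + 1"]])
    fix n p assume "p \<in> S"
    hence "fst p \<ge> - (\<bar>fst p0\<bar> + 1)" by (auto simp: S_def)
    thus "norm (trm e a b n (fst p) (snd p)) \<le> MM e (a + 2*b) (\<bar>fst p0\<bar> + 1) n"
      using trm_bound[of "\<bar>fst p0\<bar> + 1" "fst p" e a b n "snd p"] by simp
  qed
  hence "continuous_on S (\<lambda>p. suminf (\<lambda>i. trm e a b i (fst p) (snd p)))"
  proof (rule uniform_limit_theorem[rotated])
    show "\<forall>\<^sub>F n in sequentially. continuous_on S (\<lambda>p. \<Sum>i<n. trm e a b i (fst p) (snd p))"
      by (intro always_eventually allI continuous_intros) (simp add: trm_def, intro continuous_intros)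
  qed simp
  moreover have "p0 \<in> S" by (simp add: S_def)
  ultimately have "isCont (\<lambda>p. suminf (\<lambda>i. trm e a b i (fst p) (snd p))) p0"
    using oS continuous_on_eq_continuous_at by blast
  thus "isCont (\<lambda>p. G e a b (fst p) (snd p)) p0" by (simp add: G_def)
qed

lemma w_G: "w_eps e x t = G e 0 0 x t"
proof -
  have "trm e 0 0 j x t = (let k = real (Suc j) in
      exp (- (2 powr ((1 + e) * k))) * exp (- (2 powr k) * x)
        * sin (2 powr (2 * k + 1) * t - 2 powr k * x))" for j
  proof -
    have l: "2 powr real (Suc j) = lam j" unfolding lam_def by (rule powr_realpow) simp
    have l2: "2 powr ((1 + e) * real (Suc j)) = lam j powr (1 + e)"
      by (simp add: l[symmetric] powr_powr mult.commute)
    have l3: "2 powr (2 * real (Suc j) + 1) = 2 * lam j ^ 2"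
    proof -
      have "2 powr (2 * real (Suc j) + 1) = 2 powr real (Suc j) * 2 powr real (Suc j) * 2 powr 1"
        by (simp only: powr_add[symmetric]) (simp add: algebra_simps)
      thus ?thesis unfolding l by (simp add: power2_eq_square)
    qed
    have "Im (exp (al j * of_real x + be j * of_real t)) = exp (- lam j * x) * sin (2 * lam j ^ 2 * t - lam j * x)"
      by (simp add: Im_exp al_def be_def algebra_simps)
    thus ?thesis unfolding Let_def l l2 l3 trm_def by simp
  qed
  thus ?thesis by (simp add: w_eps_def G_def)
qed

lemma w_eq_G: "w_eps e = G e 0 0" by (intro ext) (simp add: w_G)

lemma dx_G: "0 < e \<Longrightarrow> dx (G e a b) = G e (Suc a) b"
  by (intro ext) (simp add: dx_def DERIV_imp_deriv[OF G_dx])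

lemma dt_G: "0 < e \<Longrightarrow> dt (G e a b) = G e a (Suc b)"
  by (intro ext) (simp add: dt_def DERIV_imp_deriv[OF G_dt])

lemma partials_G: "0 < e \<Longrightarrow> partials ops (w_eps e) = G e (length (filter id ops)) (length (filter Not ops))"
  by (induction ops) (auto simp: w_eq_G dx_G dt_G)

lemma smooth: "0 < e \<Longrightarrow> smooth2 (w_eps e)"
  unfolding smooth2_def partials_G
  by (auto simp: G_cont real_differentiable_def intro: G_dx G_dt)

lemma heat: "0 < e \<Longrightarrow> dt (w_eps e) x t - dx (dx (w_eps e)) x t = 0"
proof -
  assume e: "0 < e"
  have "trm e 0 1 j x t = trm e 2 0 j x t" for j
    by (simp add: trm_def al_def be_def power2_eq_square algebra_simps)
  hence "G e 0 1 x t = G e 2 0 x t" by (simp add: G_def)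
  thus ?thesis by (simp add: w_eq_G dx_G dt_G e numeral_2_eq_2)
qed

lemma lam_ge1: "lam j \<ge> 1" using lam_ge[of j] by simp

lemma lam_powr_ge_lam: "0 \<le> e \<Longrightarrow> lam j powr (1+e) \<ge> lam j"
  unfolding lam_powr_split using lam_ge1[of j] ge_one_powr_ge_zero[of "lam j" e]
  by (simp add: mult_le_cancel_left1)

lemma young_like:
  assumes e: "0 < e"
  shows "lam j * \<bar>x\<bar> - lam j powr (1+e) \<le> 2 powr (1/e) * \<bar>x\<bar> powr (1 + 1/e) - lam j powr (1+e) / 2"
proof (cases "lam j powr e \<ge> 2 * \<bar>x\<bar>")
  case True
  have l: "lam j > 0" by (rule lam_pos)
  have "lam j * \<bar>x\<bar> \<le> lam j * (lam j powr e / 2)" using True l by (intro mult_left_mono) auto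
  hence "lam j * \<bar>x\<bar> \<le> lam j powr (1+e) / 2" by (simp add: lam_powr_split)
  moreover have "0 \<le> 2 powr (1/e) * \<bar>x\<bar> powr (1 + 1/e)" by simp
  ultimately show ?thesis by linarith
next
  case False
  have l: "lam j > 0" by (rule lam_pos)
  hence xp: "\<bar>x\<bar> > 0" using False by (smt (verit) powr_gt_zero)
  have "lam j = (lam j powr e) powr (1/e)" using e l by (simp add: powr_powr)
  also have "\<dots> < (2 * \<bar>x\<bar>) powr (1/e)" using False e by (intro powr_less_mono2) auto
  finally have "lam j * \<bar>x\<bar> \<le> (2 * \<bar>x\<bar>) powr (1/e) * \<bar>x\<bar>" using xp by simp
  also have "\<dots> = 2 powr (1/e) * \<bar>x\<bar> powr (1 + 1/e)"
    using xp by (simp add: powr_mult powr_add)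
  finally have "lam j * \<bar>x\<bar> \<le> 2 powr (1/e) * \<bar>x\<bar> powr (1 + 1/e)" .
  moreover have "0 \<le> lam j powr (1+e)" by simp
  ultimately show ?thesis by linarith
qed

lemma summ_half: assumes "0 < e" shows "summable (\<lambda>j. exp (- (lam j powr (1+e) / 2)))"
proof (rule summable_comparison_test[OF _ summable_geometric[of "exp (-1/2) :: real"]])
  show "\<exists>N. \<forall>n\<ge>N. norm (exp (- (lam n powr (1 + e) / 2))) \<le> exp (- 1 / 2) ^ n"
  proof (intro exI[of _ 0] allI impI)
    fix n :: nat
    have "real n \<le> lam n powr (1+e)" using lam_ge[of n] lam_powr_ge_lam[of e n] assms by simp
    hence "exp (- (lam n powr (1 + e) / 2)) \<le> exp (real n * (-1/2))" by simp
    thus "norm (exp (- (lam n powr (1 + e) / 2))) \<le> exp (- 1 / 2) ^ n"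
      by (simp add: exp_of_nat_mult[symmetric])
  qed
qed simp

lemma growth: assumes e: "0 < e"
  shows "\<exists>A1 A2. 0 < A1 \<and> 0 < A2 \<and>
         (\<forall>x t. \<bar>w_eps e x t\<bar> * exp (- A2 * \<bar>x\<bar> powr (1 + 1 / e)) \<le> A1)"
proof -
  define A2 where "A2 = (2::real) powr (1/e)"
  define S where "S = (\<Sum>j. exp (- (lam j powr (1+e) / 2)))"
  have S0: "S \<ge> 0" unfolding S_def by (intro suminf_nonneg summ_half e) simp
  have H: "\<bar>w_eps e x t\<bar> * exp (- A2 * \<bar>x\<bar> powr (1 + 1 / e)) \<le> S" for x t
  proof -
    define E where "E = exp (A2 * \<bar>x\<bar> powr (1 + 1 / e))"
    have Ep: "E > 0" by (simp add: E_def)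
    have b: "\<bar>trm e 0 0 j x t\<bar> \<le> E * exp (- (lam j powr (1+e) / 2))" for j
    proof -
      have "\<bar>trm e 0 0 j x t\<bar> \<le> exp (lam j * \<bar>x\<bar> - lam j powr (1+e))"
        using trm_bound[of "\<bar>x\<bar>" x e 0 0 j t] by simp
      also have "\<dots> \<le> exp (A2 * \<bar>x\<bar> powr (1 + 1/e) - lam j powr (1+e) / 2)"
        using young_like[OF e, of j x] by (simp add: A2_def)
      also have "\<dots> = E * exp (- (lam j powr (1+e) / 2))"
        unfolding E_def exp_add[symmetric] by simp
      finally show ?thesis .
    qed
    have "\<bar>w_eps e x t\<bar> = \<bar>\<Sum>j. trm e 0 0 j x t\<bar>" by (simp add: w_G G_def)
    also have "\<dots> \<le> (\<Sum>j. \<bar>trm e 0 0 j x t\<bar>)" by (rule summable_rabs[OF trm_summable[OF e]])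
    also have "\<dots> \<le> (\<Sum>j. E * exp (- (lam j powr (1+e) / 2)))"
      by (intro suminf_le b trm_summable e summable_mult summ_half)
    also have "\<dots> = E * S" unfolding S_def by (intro suminf_mult summ_half e)
    finally have "\<bar>w_eps e x t\<bar> \<le> E * S" .
    hence "\<bar>w_eps e x t\<bar> / E \<le> S" using Ep by (simp add: field_simps)
    thus ?thesis by (simp add: E_def exp_minus field_simps)
  qed
  have "A2 > 0" by (simp add: A2_def)
  moreover have "\<forall>x t. \<bar>w_eps e x t\<bar> * exp (- A2 * \<bar>x\<bar> powr (1 + 1 / e)) \<le> S + 1"
    by (intro allI, rule order_trans[OF H]) simp
  ultimately have "0 < S + 1 \<and> 0 < A2 \<and> (\<forall>x t. \<bar>w_eps e x t\<bar> * exp (- A2 * \<bar>x\<bar> powr (1 + 1 / e)) \<le> S + 1)"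
    using S0 by (intro conjI) auto
  thus ?thesis by blast
qed



definition TT :: "real \<Rightarrow> real \<Rightarrow> nat \<Rightarrow> nat \<Rightarrow> real" where
  "TT e x0 j m = exp (- (lam j powr (1+e))) * (2 * lam j ^ 2) ^ m * exp (- lam j * x0)"

definition Ph :: "real \<Rightarrow> real \<Rightarrow> nat \<Rightarrow> nat \<Rightarrow> real" where
  "Ph e x0 j m = - (lam j powr (1+e)) - lam j * x0 + real m * (ln 2 + 2 * (real j + 1) * ln 2)"

lemma TT_Ph: "TT e x0 j m = exp (Ph e x0 j m)"
proof -
  have l: "lam j > 0" by (rule lam_pos)
  have "ln (2 * lam j ^ 2) = ln 2 + 2 * ln (lam j)" using l by (simp add: ln_mult ln_realpow)
  hence "2 * lam j ^ 2 = exp (ln 2 + 2 * (real j + 1) * ln 2)"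
    using l ln_lam[of j] by (metis exp_ln mult.assoc mult_pos_pos zero_less_numeral zero_less_power)
  hence "(2 * lam j ^ 2) ^ m = exp (real m * (ln 2 + 2 * (real j + 1) * ln 2))"
    by (simp add: exp_of_nat_mult[symmetric])
  hence "TT e x0 j m = exp (- (lam j powr (1+e))) * exp (real m * (ln 2 + 2 * (real j + 1) * ln 2)) * exp (- lam j * x0)"
    unfolding TT_def by simp
  also have "\<dots> = exp (Ph e x0 j m)"
    unfolding Ph_def by (simp only: exp_add[symmetric]) (simp add: algebra_simps)
  finally show ?thesis .
qed

lemma TT_pos: "TT e x0 j m > 0" by (simp add: TT_Ph)

lemma trm_TT: "\<bar>trm e 0 m j x0 t0\<bar> \<le> TT e x0 j m"
proof -
  have "\<bar>trm e 0 m j x0 t0\<bar> \<le> exp (- (lam j powr (1+e))) *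
     norm (be j ^ m * exp (al j * of_real x0 + be j * of_real t0))"
    unfolding trm_def abs_mult abs_exp_cancel power_0 mult_1_left by (intro mult_left_mono abs_Im_le_cmod) auto
  also have "norm (be j ^ m * exp (al j * of_real x0 + be j * of_real t0))
     = (2 * lam j ^ 2) ^ m * exp (- lam j * x0)"
    by (simp add: norm_mult norm_power norm_be) (simp add: al_def be_def)
  finally show ?thesis by (simp add: TT_def mult_ac)
qed

lemma L_bounds: "2/3 \<le> ln (2::real)" "ln (2::real) \<le> 25/36"
  using ln2_ge_two_thirds ln2_le_25_over_36 by auto

lemma lam_Suc: "lam (Suc j) = 2 * lam j" by (simp add: lam_def)

lemma lam_mono2: "j < K \<Longrightarrow> 2 * lam j \<le> lam K"
proof -
  assume "j < K"
  hence "(2::real) ^ Suc (Suc j) \<le> 2 ^ Suc K" by (intro power_increasing) auto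
  thus ?thesis by (simp add: lam_def)
qed

lemma Ph_diff: "Ph e x0 j m - Ph e x0 K m =
   (lam K powr (1+e) - lam j powr (1+e)) + (lam K - lam j) * x0 - 2 * (real m * ln 2) * (real K - real j)"
  unfolding Ph_def by (simp add: algebra_simps)

lemma C1:
  assumes e: "0 < e" "e < 1" and jK: "j < K"
  and m1: "5/8 * lam K powr (1+e) \<le> real m"
  and Y: "lam K powr e \<ge> 12 * (\<bar>x0\<bar> + 40)"
  shows "TT e x0 j m \<le> TT e x0 K m / (40 * lam K)"
proof -
  define s where "s = lam K"
  define P where "P = lam K powr (1+e)"
  define M where "M = real m * ln 2"
  have s0: "s > 0" by (simp add: s_def lam_pos)
  have PsY: "P = s * lam K powr e" by (simp add: P_def s_def lam_powr_split)
  have P0: "P \<ge> 0" by (simp add: P_def)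
  have M1: "M \<ge> 5/12 * P"
  proof -
    have "5/12 * P = (5/8 * P) * (2/3)" by simp
    also have "\<dots> \<le> real m * ln 2" using m1 L_bounds P0 unfolding P_def
      by (intro mult_mono) auto
    finally show ?thesis by (simp add: M_def)
  qed
  have lj: "2 * lam j \<le> s" using lam_mono2[OF jK] by (simp add: s_def)
  have ljp: "lam j > 0" by (rule lam_pos)
  have x0t: "(s - lam j) * x0 \<le> s * \<bar>x0\<bar>"
  proof -
    have "(s - lam j) * x0 \<le> (s - lam j) * \<bar>x0\<bar>" using lj ljp by (intro mult_left_mono) auto
    also have "\<dots> \<le> s * \<bar>x0\<bar>" using ljp by (intro mult_right_mono) auto
    finally show ?thesis .
  qed
  have PD: "Ph e x0 j m - Ph e x0 K m = (P - lam j powr (1+e)) + (s - lam j) * x0 - 2 * M * (real K - real j)"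
    unfolding Ph_diff P_def s_def M_def ..
  have diff: "Ph e x0 j m - Ph e x0 K m \<le> - (1/12) * P + s * \<bar>x0\<bar>"
  proof (cases "K = Suc j")
    case True
    have "lam j = s / 2" using True by (simp add: s_def lam_Suc)
    hence "lam j powr (1+e) = (s / 2) powr (1+e)" by (rule arg_cong)
    also have "\<dots> = P / 2 powr (1+e)" unfolding P_def s_def by (rule powr_divide)
    finally have "lam j powr (1+e) = P / 2 powr (1+e)" .
    moreover have "2 powr (1+e) \<le> (2::real) powr 2" using e by (intro powr_mono) auto
    hence "2 powr (1+e) \<le> (4::real)" by simp
    hence "P / 4 \<le> P / 2 powr (1+e)" using P0 by (intro divide_left_mono) auto
    ultimately have "lam j powr (1+e) \<ge> P / 4" by simp
    moreover have "real K - real j = 1" using True by simp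
    ultimately show ?thesis unfolding PD using M1 x0t by simp
  next
    case False
    hence "real K - real j \<ge> 2" using jK by linarith
    hence "2 * M * (real K - real j) \<ge> 2 * M * 2" using M1 P0 by (intro mult_left_mono) auto
    moreover have "lam j powr (1+e) \<ge> 0" by simp
    ultimately show ?thesis unfolding PD using M1 x0t P0 by linarith
  qed
  have "P \<ge> s * (12 * (\<bar>x0\<bar> + 40))" unfolding PsY using Y s0 by (intro mult_left_mono) auto
  hence d2: "Ph e x0 j m - Ph e x0 K m \<le> - (40 * s)" using diff by (simp add: algebra_simps)
  have "TT e x0 j m = exp (Ph e x0 K m) * exp (Ph e x0 j m - Ph e x0 K m)"
    by (simp add: TT_Ph exp_add[symmetric])
  also have "\<dots> \<le> exp (Ph e x0 K m) * exp (- (40 * s))" using d2 by simp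
  also have "exp (- (40 * s)) \<le> 1 / (40 * s)"
  proof -
    have "40 * s \<le> exp (40 * s)" by (smt (verit) exp_ge_add_one_self)
    thus ?thesis using s0 by (simp add: exp_minus field_simps)
  qed
  hence "exp (Ph e x0 K m) * exp (- (40 * s)) \<le> exp (Ph e x0 K m) * (1 / (40 * s))"
    by (intro mult_left_mono) auto
  finally show ?thesis by (simp add: TT_Ph s_def)
qed

lemma exp_m1_half: "exp (-1::real) \<le> 1/2"
proof -
  have "2 < exp (1::real)" using ln_2_less_1 by (metis exp_less_mono exp_ln zero_less_numeral)
  thus ?thesis by (simp add: exp_minus field_simps)
qed

lemma C2:
  assumes e: "0 < e" "e < 1"
  and m2: "real m \<le> 5/8 * lam K powr (1+e) + 2"
  and Y: "lam K powr e \<ge> 8 * (\<bar>x0\<bar> + 9)"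
  shows "TT e x0 (i + Suc K) m \<le> TT e x0 K m * (1/64) * (1/2)^i"
proof -
  define j where "j = i + Suc K"
  define s where "s = lam K"
  define P where "P = lam K powr (1+e)"
  define M where "M = real m * ln 2"
  define q where "q = (2::real) ^ Suc i"
  have s1: "s \<ge> 1" by (simp add: s_def lam_ge1)
  have PsY: "P = s * lam K powr e" by (simp add: P_def s_def lam_powr_split)
  have P0: "P \<ge> 0" by (simp add: P_def)
  have M0: "M \<ge> 0" by (simp add: M_def)
  have M2: "2 * M \<le> 125/144 * P + 25/9"
  proof -
    have "real m * ln 2 \<le> (5/8 * P + 2) * (25/36)" using m2 L_bounds P0 unfolding P_def
      by (intro mult_mono) auto
    thus ?thesis by (simp add: M_def)
  qed
  have q1: "q - 1 \<ge> real i + 1"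
  proof -
    have "Suc i < 2 ^ Suc i" by (rule less_exp)
    hence "Suc (Suc i) \<le> (2::nat) ^ Suc i" by simp
    hence "real (Suc (Suc i)) \<le> real ((2::nat) ^ Suc i)" by (rule of_nat_mono)
    thus ?thesis by (simp add: q_def)
  qed
  have lj: "lam j = s * q" by (simp add: j_def s_def q_def lam_def power_add)
  have "lam j powr (1+e) = P * q powr (1+e)" unfolding lj P_def s_def
    by (rule powr_mult)
  moreover have "q powr (1+e) \<ge> q powr 1" using e q1 by (intro powr_mono) auto
  hence "q powr (1+e) \<ge> q" using q1 by simp
  ultimately have ljP: "lam j powr (1+e) \<ge> P * q" using P0 by (simp add: mult_left_mono)
  have PD: "Ph e x0 j m - Ph e x0 K m = (P - lam j powr (1+e)) + (s - lam j) * x0 + 2 * M * (real i + 1)"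
    unfolding Ph_diff P_def s_def M_def by (simp add: j_def algebra_simps)
  have Pbig: "P \<ge> s * \<bar>x0\<bar> + 9"
  proof -
    have "P \<ge> s * (8 * (\<bar>x0\<bar> + 9))" unfolding PsY using Y s1 by (intro mult_left_mono) auto
    moreover have "s * (8 * (\<bar>x0\<bar> + 9)) = 8 * (s * \<bar>x0\<bar>) + 72 * s" by (simp add: algebra_simps)
    moreover have "s * \<bar>x0\<bar> \<ge> 0" using s1 by simp
    ultimately show ?thesis using s1 by linarith
  qed
  define Q where "Q = P - s * \<bar>x0\<bar> - 2 * M"
  have Q6: "Q \<ge> 6"
  proof -
    have "19/144 * P \<ge> 19/144 * (s * (8 * (\<bar>x0\<bar> + 9)))" unfolding PsY using Y s1
      by (intro mult_left_mono) auto
    moreover have "s * (8 * (\<bar>x0\<bar> + 9)) = 8 * (s * \<bar>x0\<bar>) + 72 * s" by (simp add: algebra_simps)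
    moreover have "s * \<bar>x0\<bar> \<ge> 0" using s1 by simp
    ultimately show ?thesis unfolding Q_def using M2 s1 by linarith
  qed
  have "(s - lam j) * x0 \<le> s * (q - 1) * \<bar>x0\<bar>"
  proof -
    have "(s - lam j) * x0 = - (s * (q - 1)) * x0" by (simp add: lj algebra_simps)
    also have "\<dots> \<le> s * (q - 1) * \<bar>x0\<bar>"
    proof -
      have "s * (q - 1) \<ge> 0" using s1 q1 by simp
      from mult_left_mono[of "-x0" "\<bar>x0\<bar>", OF _ this] show ?thesis by simp
    qed
    finally show ?thesis .
  qed
  hence "Ph e x0 j m - Ph e x0 K m \<le> - ((q - 1) * (P - s * \<bar>x0\<bar>)) + 2 * M * (real i + 1)"
    unfolding PD using ljP by (simp add: algebra_simps)
  also have "- ((q - 1) * (P - s * \<bar>x0\<bar>)) \<le> - ((real i + 1) * (P - s * \<bar>x0\<bar>))"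
    using q1 Pbig by (simp add: mult_right_mono)
  finally have "Ph e x0 j m - Ph e x0 K m \<le> - ((real i + 1) * Q)"
    unfolding Q_def by (simp add: algebra_simps)
  also have "\<dots> \<le> - ((real i + 1) * 6)"
    using mult_left_mono[OF Q6, of "real i + 1"] by linarith
  finally have d: "Ph e x0 j m - Ph e x0 K m \<le> - (real (6 * Suc i))" by simp
  have "TT e x0 j m = exp (Ph e x0 K m) * exp (Ph e x0 j m - Ph e x0 K m)"
    by (simp add: TT_Ph exp_add[symmetric])
  also have "\<dots> \<le> exp (Ph e x0 K m) * exp (- (real (6 * Suc i)))" using d by simp
  also have "exp (- (real (6 * Suc i))) = exp (-1) ^ (6 * Suc i)"
    by (simp add: exp_of_nat_mult[symmetric])
  also have "\<dots> \<le> (1/2) ^ (6 * Suc i)" by (intro power_mono exp_m1_half) simp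
  also have "(1/2::real) ^ (6 * Suc i) = (1/64) * (1/64) ^ i"
  proof -
    have h: "(1/2::real)^6 = 1/64" by (simp add: power_divide)
    show ?thesis by (simp only: power_mult power_add h) simp
  qed
  also have "\<dots> \<le> (1/64) * (1/2) ^ i" by (intro mult_left_mono power_mono) auto
  finally show ?thesis unfolding j_def by (simp add: TT_Ph mult_ac)
qed

lemma lower:
  assumes e: "0 < e" "e < 1"
  and m1: "5/8 * lam K powr (1+e) \<le> real m"
  and m2: "real m \<le> 5/8 * lam K powr (1+e) + 2"
  and Y1: "lam K powr e \<ge> 12 * (\<bar>x0\<bar> + 40)"
  and Y2: "lam K powr e \<ge> 8 * (\<bar>x0\<bar> + 9)"
  and big: "\<bar>trm e 0 m K x0 t0\<bar> \<ge> 7/10 * TT e x0 K m"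
  shows "\<bar>G e 0 m x0 t0\<bar> \<ge> 3/5 * TT e x0 K m"
proof -
  define a where "a j = trm e 0 m j x0 t0" for j
  define T where "T = TT e x0 K m"
  have T0: "T > 0" by (simp add: T_def TT_pos)
  have sa: "summable a" unfolding a_def by (rule trm_summable'[OF e(1)])
  have saa: "summable (\<lambda>j. \<bar>a j\<bar>)" unfolding a_def by (rule trm_summable[OF e(1)])
  have split: "G e 0 m x0 t0 = (\<Sum>i. a (i + Suc K)) + (\<Sum>j<K. a j) + a K"
    using suminf_split_initial_segment[OF sa, of "Suc K"] by (simp add: G_def a_def[symmetric])
  have h1: "\<bar>\<Sum>j<K. a j\<bar> \<le> T / 40"
  proof -
    have "\<bar>\<Sum>j<K. a j\<bar> \<le> (\<Sum>j<K. \<bar>a j\<bar>)" by (rule sum_abs)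
    also have "\<dots> \<le> (\<Sum>j<K. T / (40 * lam K))"
    proof (rule sum_mono)
      fix j assume "j \<in> {..<K}"
      hence "j < K" by simp
      from order_trans[OF trm_TT C1[OF e this m1 Y1]]
      show "\<bar>a j\<bar> \<le> T / (40 * lam K)" by (simp add: a_def T_def)
    qed
    also have "\<dots> = real K * T / (40 * lam K)" by simp
    also have "\<dots> \<le> T / 40"
    proof -
      have "real K \<le> lam K" using lam_ge[of K] by simp
      hence "real K * T \<le> lam K * T" using T0 by (intro mult_right_mono) auto
      thus ?thesis using lam_pos[of K] by (simp add: field_simps)
    qed
    finally show ?thesis .
  qed
  have h2: "\<bar>\<Sum>i. a (i + Suc K)\<bar> \<le> T / 32"
  proof -
    have s1: "summable (\<lambda>i. \<bar>a (i + Suc K)\<bar>)" using summable_ignore_initial_segment[OF saa] .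
    have s2: "summable (\<lambda>i. T * (1/64) * (1/2::real)^i)"
      by (intro summable_mult summable_geometric) simp
    have "\<bar>\<Sum>i. a (i + Suc K)\<bar> \<le> (\<Sum>i. \<bar>a (i + Suc K)\<bar>)" by (rule summable_rabs[OF s1])
    also have "\<dots> \<le> (\<Sum>i. T * (1/64) * (1/2::real)^i)"
    proof (rule suminf_le[OF _ s1 s2])
      fix i show "\<bar>a (i + Suc K)\<bar> \<le> T * (1/64) * (1/2::real)^i"
        using trm_TT[of e m "i + Suc K" x0 t0] C2[OF e m2 Y2, of i] by (simp add: a_def T_def)
    qed
    also have "\<dots> = T * (1/64) * 2" 
      by (subst suminf_mult) (auto simp: suminf_geometric)
    finally show ?thesis by simp
  qed
  have "\<bar>a K\<bar> \<ge> 7/10 * T" using big by (simp add: a_def T_def)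
  thus ?thesis unfolding split T_def[symmetric] using h1 h2 T0 by linarith
qed

lemma big_term:
  "\<bar>trm e 0 n K x0 t0\<bar> \<ge> 7/10 * TT e x0 K n \<or> \<bar>trm e 0 (Suc n) K x0 t0\<bar> \<ge> 7/10 * TT e x0 K (Suc n)"
proof -
  define c where "c = exp (- (lam K powr (1+e)))"
  define r where "r = 2 * lam K ^ 2"
  define v where "v = be K ^ n * exp (al K * of_real x0 + be K * of_real t0)"
  have c0: "c > 0" by (simp add: c_def)
  have r0: "r > 0" using lam_pos[of K] by (simp add: r_def)
  have nv: "norm v = r ^ n * exp (- lam K * x0)"
    by (simp add: v_def r_def norm_mult norm_power norm_be) (simp add: al_def be_def)
  have T1: "TT e x0 K n = c * norm v" by (simp add: TT_def nv c_def r_def)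
  have T2: "TT e x0 K (Suc n) = c * r * norm v" by (simp add: TT_def nv c_def r_def)
  have t1: "trm e 0 n K x0 t0 = c * Im v" by (simp add: trm_def c_def v_def)
  have "trm e 0 (Suc n) K x0 t0 = c * Im (be K * v)" by (simp add: trm_def c_def v_def mult_ac)
  also have "be K * v = \<i> * of_real r * v" by (simp add: be_def r_def)
  finally have t2: "trm e 0 (Suc n) K x0 t0 = c * r * Re v" by simp
  have sq: "norm v ^ 2 = Re v ^ 2 + Im v ^ 2" by (rule cmod_power2)
  have sq7: "(7/10 * norm v) ^ 2 = 49/100 * norm v ^ 2" by (simp add: power2_eq_square)
  have nv0: "norm v ^ 2 \<ge> 0" by simp
  show ?thesis
  proof (cases "Im v ^ 2 \<ge> norm v ^ 2 / 2")
    case True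
    have "(7/10 * norm v) ^ 2 \<le> \<bar>Im v\<bar> ^ 2" using True sq7 nv0 unfolding power2_abs by linarith
    hence "7/10 * norm v \<le> \<bar>Im v\<bar>" by (rule power2_le_imp_le) simp
    hence "c * (7/10 * norm v) \<le> c * \<bar>Im v\<bar>" using c0 by simp
    thus ?thesis using c0 by (simp add: t1 T1 abs_mult)
  next
    case False
    hence "Re v ^ 2 \<ge> norm v ^ 2 / 2" using sq by linarith
    hence "(7/10 * norm v) ^ 2 \<le> \<bar>Re v\<bar> ^ 2" using sq7 nv0 unfolding power2_abs by linarith
    hence "7/10 * norm v \<le> \<bar>Re v\<bar>" by (rule power2_le_imp_le) simp
    hence "(c * r) * (7/10 * norm v) \<le> (c * r) * \<bar>Re v\<bar>" using c0 r0 by simp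
    thus ?thesis using c0 r0 by (simp add: t2 T2 abs_mult mult_ac)
  qed
qed

lemma upper:
  assumes e: "0 < e" "e < 1" and C: "C > 0" and rho: "\<rho> > 0"
  and m1: "5/8 * lam K powr (1+e) \<le> real m"
  and m2: "real m \<le> 5/8 * lam K powr (1+e) + 2"
  and Y3: "lam K powr e \<ge> 4 * (\<bar>x0\<bar> + 2 * C) + 6"
  and Z: "lam K powr (1-e) \<ge> 5 * \<rho>"
  shows "C * fact m * \<rho> ^ m < 3/5 * TT e x0 K m"
proof -
  define s where "s = lam K"
  define Y where "Y = lam K powr e"
  define P where "P = lam K powr (1+e)"
  have s1: "s \<ge> 1" by (simp add: s_def lam_ge1)
  have PsY: "P = s * Y" by (simp add: P_def s_def Y_def lam_powr_split)
  have sYZ: "s = Y * lam K powr (1-e)"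
    using lam_pos[of K] by (simp add: s_def Y_def powr_add[symmetric])
  have Y6: "Y \<ge> 6" using Y3 C by (simp add: Y_def)
  have "s * Y \<ge> 1 * Y" using s1 Y6 by (intro mult_right_mono) auto
  hence P6: "P \<ge> 6" unfolding PsY using Y6 by linarith
  have mP: "real m \<le> P" using m2 P6 unfolding P_def by linarith
  have P0: "P > 0" using P6 by simp
  define W where "W = (P * \<rho>) ^ m"
  have W0: "W > 0" using P0 rho by (simp add: W_def)
  have "fact m \<le> real (m ^ m)" by (rule fact_le_power)
  also have "\<dots> = real m ^ m" by simp
  also have "\<dots> \<le> P ^ m" using mP by (intro power_mono) auto
  finally have "C * fact m * \<rho> ^ m \<le> C * P ^ m * \<rho> ^ m" using C rho by (simp add: mult_mono)
  hence up: "C * fact m * \<rho> ^ m \<le> C * W" by (simp add: W_def power_mult_distrib)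
  have q1: "2 * s ^ 2 = 2 * s * (Y * lam K powr (1-e))"
    unfolding sYZ[symmetric] by (simp add: power2_eq_square)
  have q2: "2 * s * (Y * lam K powr (1-e)) \<ge> 2 * s * (Y * (5 * \<rho>))" using Z s1 Y6
    by (intro mult_left_mono) auto
  have q3: "2 * s * (Y * (5 * \<rho>)) = 10 * (P * \<rho>)" by (simp add: PsY algebra_simps)
  have "P * \<rho> > 0" using P0 rho by simp
  hence "2 * s ^ 2 \<ge> 9 * (P * \<rho>)" using q1 q2 q3 by linarith
  hence "(2 * s ^ 2) ^ m \<ge> (9 * (P * \<rho>)) ^ m" using P0 rho by (intro power_mono) auto
  hence A: "(2 * s ^ 2) ^ m \<ge> 9 ^ m * W" by (simp add: W_def power_mult_distrib)
  have "exp (5/4 * P) \<le> exp (2 * real m)" using m1 by (simp add: P_def)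
  also have "\<dots> = exp 2 ^ m" by (simp add: exp_of_nat_mult[symmetric] mult.commute)
  also have "\<dots> \<le> 9 ^ m"
  proof (intro power_mono)
    have "exp (2::real) = exp 1 ^ 2" by (simp add: exp_of_nat_mult[symmetric])
    also have "\<dots> \<le> 3 ^ 2" using exp_le by (intro power_mono) auto
    finally show "exp (2::real) \<le> 9" by simp
  qed simp
  finally have B: "exp (5/4 * P) \<le> 9 ^ m" .
  have "P / 4 - s * \<bar>x0\<bar> \<ge> 2 * C"
  proof -
    have "P \<ge> s * (4 * (\<bar>x0\<bar> + 2 * C) + 6)" unfolding PsY using Y3 s1 by (intro mult_left_mono) (auto simp: Y_def)
    moreover have "s * (4 * (\<bar>x0\<bar> + 2 * C) + 6) = 4 * (s * \<bar>x0\<bar>) + 8 * (s * C) + 6 * s" by (simp add: algebra_simps)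
    moreover have "s * C \<ge> C" using s1 C by simp
    ultimately show ?thesis using s1 by linarith
  qed
  hence E: "exp (P / 4 - s * \<bar>x0\<bar>) \<ge> 1 + 2 * C"
    using exp_ge_add_one_self[of "P / 4 - s * \<bar>x0\<bar>"] by linarith
  have "TT e x0 K m = exp (- P) * (2 * s ^ 2) ^ m * exp (- s * x0)" by (simp add: TT_def P_def s_def)
  also have "\<dots> \<ge> exp (- P) * (9 ^ m * W) * exp (- s * \<bar>x0\<bar>)"
  proof (intro mult_mono A)
    show "exp (- s * \<bar>x0\<bar>) \<le> exp (- s * x0)" using s1
      by (simp add: mult_left_mono[of "-x0" "\<bar>x0\<bar>" s])
  qed (use W0 in auto)
  also have "exp (- P) * (9 ^ m * W) * exp (- s * \<bar>x0\<bar>) \<ge> exp (- P) * (exp (5/4 * P) * W) * exp (- s * \<bar>x0\<bar>)"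
    using B W0 by (intro mult_right_mono mult_left_mono) auto
  also have "exp (- P) * (exp (5/4 * P) * W) * exp (- s * \<bar>x0\<bar>) = exp (P / 4 - s * \<bar>x0\<bar>) * W"
    by (simp add: exp_add[symmetric] algebra_simps)
  finally have "TT e x0 K m \<ge> exp (P / 4 - s * \<bar>x0\<bar>) * W" .
  moreover have "exp (P / 4 - s * \<bar>x0\<bar>) * W \<ge> (1 + 2 * C) * W" using E W0 by (intro mult_right_mono) auto
  ultimately have "3/5 * TT e x0 K m \<ge> 3/5 * ((1 + 2 * C) * W)" by linarith
  moreover have "C * W < 3/5 * ((1 + 2 * C) * W)"
  proof -
    have "C * W > 0" using W0 C by simp
    moreover have "3/5 * ((1 + 2 * C) * W) = 3/5 * W + 6/5 * (C * W)" by (simp add: algebra_simps)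
    ultimately show ?thesis using W0 by linarith
  qed
  ultimately show ?thesis using up by linarith
qed

lemma derivs_G: "0 < e \<Longrightarrow> (deriv ^^ n) (\<lambda>t. w_eps e x0 t) = (\<lambda>t. G e 0 n x0 t)"
proof (induction n)
  case 0 thus ?case by (simp add: w_G)
next
  case (Suc n)
  thus ?case by (auto intro!: ext DERIV_imp_deriv G_dt)
qed

lemma nonanalytic:
  assumes e: "0 < e" "e < 1"
  shows "\<not> real_analytic_at (\<lambda>t. w_eps e x0 t) t0"
proof
  assume "real_analytic_at (\<lambda>t. w_eps e x0 t) t0"
  then obtain r where r: "r > 0" and sr: "\<And>t. \<bar>t - t0\<bar> < r \<Longrightarrow>
     (\<lambda>n. (deriv ^^ n) (\<lambda>t. w_eps e x0 t) t0 / fact n * (t - t0) ^ n) sums w_eps e x0 t"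
    unfolding real_analytic_at_def by blast
  define D where "D n = G e 0 n x0 t0" for n
  have "(\<lambda>n. D n / fact n * (r/2) ^ n) sums w_eps e x0 (t0 + r/2)"
    using sr[of "t0 + r/2"] r by (simp add: derivs_G[OF e(1)] D_def)
  hence "summable (\<lambda>n. D n / fact n * (r/2) ^ n)" by (rule sums_summable)
  hence "(\<lambda>n. D n / fact n * (r/2) ^ n) \<longlonglongrightarrow> 0" by (rule summable_LIMSEQ_zero)
  hence "Bseq (\<lambda>n. D n / fact n * (r/2) ^ n)" by (intro convergent_imp_Bseq convergentI)
  then obtain C where C: "C > 0" and Cb: "\<And>n. norm (D n / fact n * (r/2) ^ n) \<le> C"
    by (rule BseqE) blast
  define \<rho> where "\<rho> = 2 / r"
  have rho: "\<rho> > 0" using r by (simp add: \<rho>_def)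
  have Dle: "\<bar>D n\<bar> \<le> C * fact n * \<rho> ^ n" for n
  proof -
    define q where "q = (r/2) ^ n / fact n"
    have q0: "q > 0" using r by (simp add: q_def)
    have "\<bar>D n\<bar> * q \<le> C" using Cb[of n] r by (simp add: abs_mult q_def)
    hence "\<bar>D n\<bar> \<le> C / q" using q0 by (simp add: le_divide_eq)
    also have "C / q = C * fact n * \<rho> ^ n" using r by (simp add: q_def \<rho>_def power_divide)
    finally show ?thesis .
  qed
  define BB where "BB = 12 * (\<bar>x0\<bar> + 40) + 8 * (\<bar>x0\<bar> + 9) + (4 * (\<bar>x0\<bar> + 2 * C) + 6)"
  have "eventually (\<lambda>K. lam K powr e \<ge> BB \<and> lam K powr (1-e) \<ge> 5 * \<rho>) sequentially"
    using ev_lam_powr[OF e(1), of BB] ev_lam_powr[of "1-e" "5 * \<rho>"] e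
    by (auto intro: eventually_conj)
  then obtain K where KY: "lam K powr e \<ge> BB" and KZ: "lam K powr (1-e) \<ge> 5 * \<rho>"
    unfolding eventually_sequentially by blast
  have a0: "\<bar>x0\<bar> \<ge> 0" by simp
  have Y1: "lam K powr e \<ge> 12 * (\<bar>x0\<bar> + 40)" using KY C a0 unfolding BB_def by (simp add: algebra_simps)
  have Y2: "lam K powr e \<ge> 8 * (\<bar>x0\<bar> + 9)" using KY C a0 unfolding BB_def by (simp add: algebra_simps)
  have Y3: "lam K powr e \<ge> 4 * (\<bar>x0\<bar> + 2 * C) + 6" using KY C a0 unfolding BB_def by (simp add: algebra_simps)
  define P where "P = lam K powr (1+e)"
  define n where "n = nat \<lceil>5/8 * P\<rceil>"
  have P0: "P \<ge> 0" by (simp add: P_def)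
  have n1: "5/8 * P \<le> real n" unfolding n_def using P0 by linarith
  have n2: "real n \<le> 5/8 * P + 1" unfolding n_def using P0 by linarith
  have key: False if m1: "5/8 * P \<le> real m" and m2: "real m \<le> 5/8 * P + 2"
     and big: "\<bar>trm e 0 m K x0 t0\<bar> \<ge> 7/10 * TT e x0 K m" for m
  proof -
    have "\<bar>G e 0 m x0 t0\<bar> \<ge> 3/5 * TT e x0 K m"
      using lower[OF e _ _ Y1 Y2 big] m1 m2 unfolding P_def by blast
    moreover have "C * fact m * \<rho> ^ m < 3/5 * TT e x0 K m"
      using upper[OF e C rho _ _ Y3 KZ] m1 m2 unfolding P_def by blast
    ultimately show False using Dle[of m] by (simp add: D_def)
  qed
  have "\<bar>trm e 0 n K x0 t0\<bar> \<ge> 7/10 * TT e x0 K n \<or> \<bar>trm e 0 (Suc n) K x0 t0\<bar> \<ge> 7/10 * TT e x0 K (Suc n)"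
    by (rule big_term)
  then show False
  proof
    assume "\<bar>trm e 0 n K x0 t0\<bar> \<ge> 7/10 * TT e x0 K n"
    thus False using key[of n] n1 n2 by linarith
  next
    assume "\<bar>trm e 0 (Suc n) K x0 t0\<bar> \<ge> 7/10 * TT e x0 K (Suc n)"
    thus False using key[of "Suc n"] n1 n2 by simp
  qed
qed

theorem theorem1p2:
  fixes \<epsilon> :: real
  assumes "0 < \<epsilon>" and "\<epsilon> < 1"
  shows "smooth2 (w_eps \<epsilon>)
    \<and> (\<forall>x t. dt (w_eps \<epsilon>) x t - dx (dx (w_eps \<epsilon>)) x t = 0)
    \<and> (\<forall>x0 t0. \<not> real_analytic_at (\<lambda>t. w_eps \<epsilon> x0 t) t0)
    \<and> (\<exists>A1 A2. 0 < A1 \<and> 0 < A2 \<and>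
         (\<forall>x t. \<bar>w_eps \<epsilon> x t\<bar> * exp (- A2 * \<bar>x\<bar> powr (1 + 1 / \<epsilon>)) \<le> A1))"
  using smooth[OF assms(1)] heat[OF assms(1)] nonanalytic[OF assms] growth[OF assms(1)] by blast

end
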